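(* Fix a horizon $T<\infty$ and assume the prefix space $\mathcal{X}_{\le T+1}$ is finite, that $0<R_{\min}\le r(z)\le R_{\max}<\infty$ for all prefixes $z$, that $0<\alpha_t<1$ for all $t$, and that $\sum_{x'}p(x'\mid z)=1$ for every prefix $z$. Let $\beta_0,\beta_1,\dots,\beta_T\ge 0$ be fixed (deterministic) powers. Run PB-SMC with $N$ particles, and let $\mathcal{P}_t$, $W_t$ be its weighted pool at round $t$. Then for every fixed $t\le T$ and every bounded $f:\mathcal{X}_{\le T+1}\to\mathbb{R}$, $$\frac{\sum_{z\in\mathcal{P}_t}W_t(z)f(z)}{\sum_{z\in\mathcal{P}_t}W_t(z)}\xrightarrow[N\to\infty]{p}\mathbb{E}_{\pi_t^{(\beta_t)}}[f(X)].$$ Moreover, if instead the powers are computed adaptively by $\beta_{t+1}=\beta_t+\gamma\bigl(1-(\sigma_t-1/C_t)\bigr)$ (with $\gamma>0$, $C_t=|\mathcal{P}_t|$, $a_z=r(z)/\sum_{y\in\mathcal{P}_t}r(y)$ and $\sigma_t=\sum_{z\in\mathcal{P}_t}a_z^2$, sums over the multiset), then each $\beta_t$ converges in probability as $N\to\infty$ to a deterministic limit $\beta_t^*$, and the same convergence holds with target $\pi_t^{(\beta_t^* )}$.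
   Context: Let $x_0$ be a fixed prompt and let reasoning steps take values in some set. A prefix is a finite sequence $z=x_{1:d}=(x_1,\dots,x_d)$ with $d\ge1$; $\mathrm{len}(z)=d$. $\mathcal{X}_s$ is the set of prefixes of length exactly $s$ and $\mathcal{X}_{\le T+1}=\bigcup_{s=1}^{T+1}\mathcal{X}_s$. A language model gives a normalized next-step kernel $p(x_d\mid x_{1:d-1})$ (conditioning on $x_0$ suppressed) and prefix probability $p(x_{1:d})=\prod_{s=1}^d p(x_s\mid x_{1:s-1})$. The parent of $z=x_{1:d}$ is $\mathrm{pa}(z)=x_{1:d-1}$ if $d\ge2$ and $\mathrm{pa}(z)=x_0$ if $d=1$. $r$ is a positive score function on prefixes with the convention $r(x_0)=1$. Powered target: for $\beta\ge0$ and round $t$, $\widetilde\pi_t^{(\beta)}(z)=p(z)\,r(z)^{\beta}\,\mathbf{1}\{\mathrm{len}(z)\le t+1\}$ on $\mathcal{X}_{\le T+1}$, and $\pi_t^{(\beta)}=\widetilde\pi_t^{(\beta)}/\sum_{y}\widetilde\pi_t^{(\beta)}(y)$. Correction factor: for $t\ge1$, $$F_t(z)=\frac{\left(\frac{r(z)}{r(\mathrm{pa}(z))}\right)^{\beta_{t-1}}r(z)^{\beta_t-\beta_{t-1}}}{\alpha_t\mathbf{1}\{\mathrm{len}(z)\ge2\}+(1-\alpha_t)\left(\frac{r(z)}{r(\mathrm{pa}(z))}\right)^{\beta_{t-1}}\mathbf{1}\{\mathrm{len}(z)\le t\}}.$$ PB-SMC (Power Backtrack SMC): $\mathcal{P}_0$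 is a multiset of $N$ i.i.d. one-step samples $x_1\sim p(\cdot\mid x_0)$ with weights $W_0(z)=r(z)^{\beta_0}$. For $t=1,\dots,T$: (i) draw $N$ parents i.i.d. from $\mathcal{P}_{t-1}$ with probabilities proportional to $W_{t-1}$ and extend each parent $u$ by one step $x'\sim p(\cdot\mid u)$, giving the multiset $\mathcal{B}_t$ of $N$ new children; (ii) independently draw a multiset $S_t$ of $Nt$ elements i.i.d. from $\mathcal{P}_{t-1}$ with probabilities proportional to $W_{t-1}$ (no extension); (iii) set $\mathcal{P}_t=S_t\uplus\mathcal{B}_t$ with weights $W_t(z)=\alpha_tF_t(z)$ for $z\in\mathcal{B}_t$ and $W_t(z)=(1-\alpha_t)F_t(z)/t$ for $z\in S_t$. *)

theory Defs
  imports "HOL-Probability.Probability_Mass_Function"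
begin

text \<open>Reasoning steps have a finite type 'a (equivalently: the prefix space of
bounded length is finite).  A prefix x_{1:d} is a list of length d \<ge> 1; the
empty list plays the role of the prompt x_0.  The next-step kernel is
K :: 'a list \<Rightarrow> 'a pmf, i.e. K u is p(. | u) (normalized by construction).\<close>

definition prefixes :: "nat \<Rightarrow> 'a list set" where
  "prefixes T = {z. 1 \<le> length z \<and> length z \<le> T + 1}"

definition pprob :: "('a list \<Rightarrow> 'a pmf) \<Rightarrow> 'a list \<Rightarrow> real" where
  "pprob K z = (\<Prod>i<length z. pmf (K (take i z)) (z ! i))"

definition rsc :: "('a list \<Rightarrow> real) \<Rightarrow> 'a list \<Rightarrow> real" where
  "rsc r z = (if z = [] then 1 else r z)"

definition target_exp ::
  "('a list \<Rightarrow> 'a pmf) \<Rightarrow> ('a list \<Rightarrow> real) \<Rightarrow> nat \<Rightarrow> nat \<Rightarrow> real \<Rightarrow> ('a list \<Rightarrow> real) \<Rightarrow> real" where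
  "target_exp K r T t \<beta> f =
     (\<Sum>z\<in>prefixes T. pprob K z * r z powr \<beta> * (if length z \<le> t + 1 then 1 else 0) * f z) /
     (\<Sum>z\<in>prefixes T. pprob K z * r z powr \<beta> * (if length z \<le> t + 1 then 1 else 0))"

definition Fcorr :: "('a list \<Rightarrow> real) \<Rightarrow> (nat \<Rightarrow> real) \<Rightarrow> real \<Rightarrow> real \<Rightarrow> nat \<Rightarrow> 'a list \<Rightarrow> real" where
  "Fcorr r \<alpha> bp bc t z =
     (let q = r z / rsc r (butlast z) in
      (q powr bp * r z powr (bc - bp)) /
      (\<alpha> t * (if 2 \<le> length z then 1 else 0) +
       (1 - \<alpha> t) * q powr bp * (if length z \<le> t then 1 else 0)))"

fun iid :: "nat \<Rightarrow> 'b pmf \<Rightarrow> 'b list pmf" where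
  "iid 0 q = return_pmf []"
| "iid (Suc n) q = bind_pmf q (\<lambda>x. map_pmf (Cons x) (iid n q))"

text \<open>A weighted pool is a list (order irrelevant, i.e. a multiset) of
(prefix, weight) pairs; resample draws a prefix with probability proportional
to its weight.\<close>
definition resample :: "('b \<times> real) list \<Rightarrow> 'b pmf" where
  "resample P = pmf_of_list (map (\<lambda>(z, w). (z, w / sum_list (map snd P))) P)"

definition estimate :: "('a list \<times> real) list \<Rightarrow> ('a list \<Rightarrow> real) \<Rightarrow> real" where
  "estimate P f = (\<Sum>(z, w)\<leftarrow>P. w * f z) / (\<Sum>(z, w)\<leftarrow>P. w)"

text \<open>Generic PB-SMC. The state after round t is (P_t, beta_t). beta_0 = b0,
and beta_t = upd t P_{t-1} beta_{t-1} for t \<ge> 1.\<close>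
fun pbsmc_gen ::
  "('a list \<Rightarrow> 'a pmf) \<Rightarrow> ('a list \<Rightarrow> real) \<Rightarrow> (nat \<Rightarrow> real) \<Rightarrow>
   (nat \<Rightarrow> ('a list \<times> real) list \<Rightarrow> real \<Rightarrow> real) \<Rightarrow> real \<Rightarrow> nat \<Rightarrow> nat \<Rightarrow>
   (('a list \<times> real) list \<times> real) pmf" where
  "pbsmc_gen K r \<alpha> upd b0 N 0 =
     map_pmf (\<lambda>xs. (map (\<lambda>x. ([x], r [x] powr b0)) xs, b0)) (iid N (K []))"
| "pbsmc_gen K r \<alpha> upd b0 N (Suc t) =
     bind_pmf (pbsmc_gen K r \<alpha> upd b0 N t) (\<lambda>(P, b).
       let b' = upd (Suc t) P b; q = resample P in
       bind_pmf (iid N (bind_pmf q (\<lambda>u. map_pmf (\<lambda>x. u @ [x]) (K u)))) (\<lambda>B.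
       map_pmf (\<lambda>S.
         (map (\<lambda>z. (z, \<alpha> (Suc t) * Fcorr r \<alpha> b b' (Suc t) z)) B @
          map (\<lambda>z. (z, (1 - \<alpha> (Suc t)) * Fcorr r \<alpha> b b' (Suc t) z / real (Suc t))) S, b'))
         (iid (N * Suc t) q)))"

definition pbsmc_fixed ::
  "('a list \<Rightarrow> 'a pmf) \<Rightarrow> ('a list \<Rightarrow> real) \<Rightarrow> (nat \<Rightarrow> real) \<Rightarrow> (nat \<Rightarrow> real) \<Rightarrow> nat \<Rightarrow> nat \<Rightarrow>
   (('a list \<times> real) list \<times> real) pmf" where
  "pbsmc_fixed K r \<alpha> \<beta> N t = pbsmc_gen K r \<alpha> (\<lambda>s P b. \<beta> s) (\<beta> 0) N t"

definition sigma_pool :: "('a list \<Rightarrow> real) \<Rightarrow> ('a list \<times> real) list \<Rightarrow> real" where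
  "sigma_pool r P = (\<Sum>(z, w)\<leftarrow>P. (r z / (\<Sum>(y, v)\<leftarrow>P. r y))\<^sup>2)"

definition adaptive_upd :: "('a list \<Rightarrow> real) \<Rightarrow> real \<Rightarrow> nat \<Rightarrow> ('a list \<times> real) list \<Rightarrow> real \<Rightarrow> real" where
  "adaptive_upd r \<gamma> t P b = b + \<gamma> * (1 - (sigma_pool r P - 1 / real (length P)))"

definition pbsmc_adaptive ::
  "('a list \<Rightarrow> 'a pmf) \<Rightarrow> ('a list \<Rightarrow> real) \<Rightarrow> (nat \<Rightarrow> real) \<Rightarrow> real \<Rightarrow> real \<Rightarrow> nat \<Rightarrow> nat \<Rightarrow>
   (('a list \<times> real) list \<times> real) pmf" where
  "pbsmc_adaptive K r \<alpha> \<gamma> b0 N t = pbsmc_gen K r \<alpha> (adaptive_upd r \<gamma>) b0 N t"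

end

theory Submission imports Defs "HOL-Probability.Hoeffding"
begin

definition cip :: "(nat \<Rightarrow> 'b pmf) \<Rightarrow> (nat \<Rightarrow> 'b \<Rightarrow> 'c::metric_space) \<Rightarrow> 'c \<Rightarrow> bool" where
  "cip M X c \<longleftrightarrow> (\<forall>\<epsilon>>0. ((\<lambda>N. measure_pmf.prob (M N) {s. dist (X N s) c > \<epsilon>}) \<longlongrightarrow> 0) sequentially)"

lemma prob_mono_supp:
  assumes "\<And>s. s \<in> set_pmf M \<Longrightarrow> s \<in> A \<Longrightarrow> s \<in> B"
  shows "measure_pmf.prob M A \<le> measure_pmf.prob M B"
proof -
  have "measure_pmf.prob M A = measure_pmf.prob M (A \<inter> set_pmf M)"
    by (simp add: measure_Int_set_pmf)
  also have "\<dots> \<le> measure_pmf.prob M B"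
    using assms by (intro measure_pmf.finite_measure_mono) auto
  finally show ?thesis .
qed

lemma cipI_bound:
  assumes "\<And>\<epsilon>. \<epsilon> > 0 \<Longrightarrow> \<exists>\<rho>. (\<rho> \<longlongrightarrow> 0) sequentially \<and>
      eventually (\<lambda>N. measure_pmf.prob (M N) {s. dist (X N s) c > \<epsilon>} \<le> \<rho> N) sequentially"
  shows "cip M X c"
  unfolding cip_def
proof (intro allI impI)
  fix \<epsilon> :: real assume "\<epsilon> > 0"
  then obtain \<rho> where r: "(\<rho> \<longlongrightarrow> 0) sequentially"
    "eventually (\<lambda>N. measure_pmf.prob (M N) {s. dist (X N s) c > \<epsilon>} \<le> \<rho> N) sequentially"
    using assms by blast
  show "((\<lambda>N. measure_pmf.prob (M N) {s. dist (X N s) c > \<epsilon>}) \<longlongrightarrow> 0) sequentially"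
    by (rule tendsto_sandwich[of "\<lambda>_. 0" _ _ \<rho>]) (use r in auto)
qed

lemma cip_cong:
  assumes "cip M X c" "eventually (\<lambda>N. \<forall>s\<in>set_pmf (M N). X N s = Y N s) sequentially"
  shows "cip M Y c"
  unfolding cip_def
proof (intro allI impI)
  fix \<epsilon> :: real assume e: "\<epsilon> > 0"
  have "eventually (\<lambda>N. measure_pmf.prob (M N) {s. dist (X N s) c > \<epsilon>} =
     measure_pmf.prob (M N) {s. dist (Y N s) c > \<epsilon>}) sequentially"
    using assms(2)
  proof eventually_elim
    case (elim N)
    show ?case by (intro antisym prob_mono_supp) (use elim in auto)
  qed
  moreover have "((\<lambda>N. measure_pmf.prob (M N) {s. dist (X N s) c > \<epsilon>}) \<longlongrightarrow> 0) sequentially"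
    using assms(1) e unfolding cip_def by blast
  ultimately show "((\<lambda>N. measure_pmf.prob (M N) {s. dist (Y N s) c > \<epsilon>}) \<longlongrightarrow> 0) sequentially"
    using Lim_transform_eventually by force
qed

lemma cip_det:
  assumes "eventually (\<lambda>N. \<forall>s\<in>set_pmf (M N). dist (X N s) c \<le> e N) sequentially"
    and "(e \<longlongrightarrow> 0) sequentially"
  shows "cip M X c"
proof (rule cipI_bound)
  fix \<epsilon> :: real assume "\<epsilon> > 0"
  then have "eventually (\<lambda>N. e N < \<epsilon>) sequentially"
    using assms(2) by (simp add: order_tendstoD(2))
  with assms(1) have "eventually (\<lambda>N. measure_pmf.prob (M N) {s. dist (X N s) c > \<epsilon>} \<le> 0) sequentially"
  proof eventually_elim
    case (elim N)
    have "measure_pmf.prob (M N) {s. dist (X N s) c > \<epsilon>} \<le> measure_pmf.prob (M N) {}"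
      by (rule prob_mono_supp) (use elim in force)
    then show ?case by simp
  qed
  then show "\<exists>\<rho>. (\<rho> \<longlongrightarrow> 0) sequentially \<and>
      eventually (\<lambda>N. measure_pmf.prob (M N) {s. dist (X N s) c > \<epsilon>} \<le> \<rho> N) sequentially"
    by (intro exI[of _ "\<lambda>_. 0"]) auto
qed

lemma cip_const: "cip M (\<lambda>N s. c) c"
  by (rule cip_det[where e="\<lambda>_. 0"]) auto

lemma cip_cont:
  assumes "cip M X c" "isCont g c"
  shows "cip M (\<lambda>N s. g (X N s)) (g c)"
  unfolding cip_def
proof (intro allI impI)
  fix \<epsilon> :: real assume e: "\<epsilon> > 0"
  obtain \<delta> where d0: "\<delta> > 0" "\<forall>x. x \<noteq> c \<and> dist x c < \<delta> \<longrightarrow> dist (g x) (g c) < \<epsilon>"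
    using assms(2) e unfolding isCont_def tendsto_iff eventually_at by auto
  have d: "\<delta> > 0" "\<And>x. dist x c < \<delta> \<Longrightarrow> dist (g x) (g c) < \<epsilon>"
    using d0 e by (auto, metis dist_self)
  have h2: "\<delta>/2 > 0" using d by simp
  have lim: "((\<lambda>N. measure_pmf.prob (M N) {s. dist (X N s) c > \<delta>/2}) \<longlongrightarrow> 0) sequentially"
    using assms(1) h2 unfolding cip_def by blast
  show "((\<lambda>N. measure_pmf.prob (M N) {s. dist (g (X N s)) (g c) > \<epsilon>}) \<longlongrightarrow> 0) sequentially"
  proof (rule tendsto_sandwich[OF _ _ tendsto_const lim])
    show "\<forall>\<^sub>F N in sequentially. 0 \<le> measure_pmf.prob (M N) {s. dist (g (X N s)) (g c) > \<epsilon>}" by simp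
    show "\<forall>\<^sub>F N in sequentially. measure_pmf.prob (M N) {s. dist (g (X N s)) (g c) > \<epsilon>}
        \<le> measure_pmf.prob (M N) {s. dist (X N s) c > \<delta>/2}"
    proof (intro always_eventually allI prob_mono_supp)
      fix N s assume "s \<in> {s. dist (g (X N s)) (g c) > \<epsilon>}"
      then have "\<not> dist (X N s) c < \<delta>" using d(2) by force
      then show "s \<in> {s. dist (X N s) c > \<delta>/2}" using d(1) by auto
    qed
  qed
qed

lemma cip_pair:
  assumes "cip M X a" "cip M Y b"
  shows "cip M (\<lambda>N s. (X N s, Y N s)) (a, b)"
  unfolding cip_def
proof (intro allI impI)
  fix \<epsilon> :: real assume e: "\<epsilon> > 0"
  have h2: "\<epsilon>/2 > 0" using e by simp
  have l1: "((\<lambda>N. measure_pmf.prob (M N) {s. dist (X N s) a > \<epsilon>/2}) \<longlongrightarrow> 0) sequentially"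
    using assms(1) h2 unfolding cip_def by blast
  have l2: "((\<lambda>N. measure_pmf.prob (M N) {s. dist (Y N s) b > \<epsilon>/2}) \<longlongrightarrow> 0) sequentially"
    using assms(2) h2 unfolding cip_def by blast
  have lim: "((\<lambda>N. measure_pmf.prob (M N) {s. dist (X N s) a > \<epsilon>/2} + measure_pmf.prob (M N) {s. dist (Y N s) b > \<epsilon>/2}) \<longlongrightarrow> 0) sequentially"
    using tendsto_add[OF l1 l2] by simp
  show "((\<lambda>N. measure_pmf.prob (M N) {s. dist (X N s, Y N s) (a, b) > \<epsilon>}) \<longlongrightarrow> 0) sequentially"
  proof (rule tendsto_sandwich[OF _ _ tendsto_const lim])
    show "\<forall>\<^sub>F N in sequentially. 0 \<le> measure_pmf.prob (M N) {s. dist (X N s, Y N s) (a, b) > \<epsilon>}" by simp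
    show "\<forall>\<^sub>F N in sequentially. measure_pmf.prob (M N) {s. dist (X N s, Y N s) (a, b) > \<epsilon>}
       \<le> measure_pmf.prob (M N) {s. dist (X N s) a > \<epsilon>/2} + measure_pmf.prob (M N) {s. dist (Y N s) b > \<epsilon>/2}"
    proof (intro always_eventually allI)
      fix N
      have "measure_pmf.prob (M N) {s. dist (X N s, Y N s) (a, b) > \<epsilon>}
          \<le> measure_pmf.prob (M N) ({s. dist (X N s) a > \<epsilon>/2} \<union> {s. dist (Y N s) b > \<epsilon>/2})"
      proof (rule prob_mono_supp)
        fix s assume "s \<in> {s. dist (X N s, Y N s) (a, b) > \<epsilon>}"
        then have "dist (X N s, Y N s) (a, b) > \<epsilon>" by simp
        moreover have "dist (X N s, Y N s) (a, b) \<le> dist (X N s) a + dist (Y N s) b"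
          unfolding dist_Pair_Pair by (rule real_sqrt_sum_squares_triangle_ineq[of _ 0 0, simplified] | simp add: sqrt_sum_squares_le_sum)
        ultimately show "s \<in> {s. dist (X N s) a > \<epsilon>/2} \<union> {s. dist (Y N s) b > \<epsilon>/2}" by auto
      qed
      also have "\<dots> \<le> measure_pmf.prob (M N) {s. dist (X N s) a > \<epsilon>/2} + measure_pmf.prob (M N) {s. dist (Y N s) b > \<epsilon>/2}"
        by (rule measure_subadditive) (auto simp: measure_pmf.emeasure_eq_measure)
      finally show "measure_pmf.prob (M N) {s. dist (X N s, Y N s) (a, b) > \<epsilon>}
       \<le> measure_pmf.prob (M N) {s. dist (X N s) a > \<epsilon>/2} + measure_pmf.prob (M N) {s. dist (Y N s) b > \<epsilon>/2}" .
    qed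
  qed
qed

lemma cip_op2:
  assumes "cip M X a" "cip M Y b" "isCont (\<lambda>p. g (fst p) (snd p)) (a, b)"
  shows "cip M (\<lambda>N s. g (X N s) (Y N s)) (g a b)"
  using cip_cont[OF cip_pair[OF assms(1,2)] assms(3)] by simp

lemma cip_add:
  fixes X Y :: "nat \<Rightarrow> 'b \<Rightarrow> real"
  assumes "cip M X a" "cip M Y b" shows "cip M (\<lambda>N s. X N s + Y N s) (a + b)"
  by (rule cip_op2[OF assms]) (intro continuous_intros)

lemma cip_diff:
  fixes X Y :: "nat \<Rightarrow> 'b \<Rightarrow> real"
  assumes "cip M X a" "cip M Y b" shows "cip M (\<lambda>N s. X N s - Y N s) (a - b)"
  by (rule cip_op2[OF assms]) (intro continuous_intros)

lemma cip_mult: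
  fixes X Y :: "nat \<Rightarrow> 'b \<Rightarrow> real"
  assumes "cip M X a" "cip M Y b" shows "cip M (\<lambda>N s. X N s * Y N s) (a * b)"
  by (rule cip_op2[OF assms]) (intro continuous_intros)

lemma cip_divide:
  fixes X Y :: "nat \<Rightarrow> 'b \<Rightarrow> real"
  assumes "cip M X a" "cip M Y b" "b \<noteq> 0" shows "cip M (\<lambda>N s. X N s / Y N s) (a / b)"
  by (rule cip_op2[OF assms(1,2)]) (use assms(3) in \<open>intro continuous_intros, auto\<close>)

lemma cip_sum:
  fixes X :: "'k \<Rightarrow> nat \<Rightarrow> 'b \<Rightarrow> real"
  assumes "finite A" "\<And>z. z \<in> A \<Longrightarrow> cip M (X z) (c z)"
  shows "cip M (\<lambda>N s. \<Sum>z\<in>A. X z N s) (\<Sum>z\<in>A. c z)"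
  using assms
proof (induction A rule: finite_induct)
  case empty then show ?case using cip_const[of M 0] by simp
next
  case (insert x F)
  then show ?case by (simp add: cip_add)
qed

lemma set_pmf_iid: "xs \<in> set_pmf (iid n q) \<Longrightarrow> length xs = n \<and> set xs \<subseteq> set_pmf q"
  by (induction n arbitrary: xs) fastforce+

lemma map_eq_bernoulli: "map_pmf (\<lambda>x. x = z) q = bernoulli_pmf (pmf q z)"
proof (rule pmf_eqI)
  fix b :: bool
  have T: "pmf (map_pmf (\<lambda>x. x = z) q) True = pmf q z"
    by (simp add: pmf_map measure_pmf_single vimage_def)
  have F: "pmf (map_pmf (\<lambda>x. x = z) q) False = 1 - pmf q z"
    using pmf_False_conv_True T by metis
  show "pmf (map_pmf (\<lambda>x. x = z) q) b = pmf (bernoulli_pmf (pmf q z)) b"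
    by (cases b) (simp_all add: T F pmf_le_1)
qed

lemma iid_count_binomial:
  "map_pmf (\<lambda>xs. count_list xs z) (iid n q) = binomial_pmf n (pmf q z)"
proof (induction n)
  case 0
  then show ?case by (simp add: binomial_pmf_0 pmf_le_1)
next
  case (Suc n)
  have p: "pmf q z \<in> {0..1}" by (simp add: pmf_le_1)
  have "map_pmf (\<lambda>xs. count_list xs z) (iid (Suc n) q)
      = bind_pmf q (\<lambda>x. map_pmf (\<lambda>k. (if x = z then 1 else 0) + k) (map_pmf (\<lambda>xs. count_list xs z) (iid n q)))"
    by (auto simp: map_bind_pmf pmf.map_comp o_def intro!: bind_pmf_cong map_pmf_cong)
  also have "\<dots> = bind_pmf q (\<lambda>x. map_pmf (\<lambda>k. (if x = z then 1 else 0) + k) (binomial_pmf n (pmf q z)))"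
    using Suc by simp
  also have "\<dots> = bind_pmf (map_pmf (\<lambda>x. x = z) q) (\<lambda>b. map_pmf (\<lambda>k. (if b then 1 else 0) + k) (binomial_pmf n (pmf q z)))"
    by (simp add: bind_map_pmf)
  also have "\<dots> = binomial_pmf (Suc n) (pmf q z)"
    unfolding map_eq_bernoulli binomial_pmf_Suc[OF p] by (simp add: map_pmf_def)
  finally show ?case .
qed

lemma iid_hoeffding:
  assumes "N > 0" "\<delta> > 0"
  shows "measure_pmf.prob (iid N q) {xs. \<bar>real (count_list xs z) / N - pmf q z\<bar> > \<delta>} \<le> 2 * exp (-2 * real N * \<delta>\<^sup>2)"
proof -
  have "measure_pmf.prob (iid N q) {xs. \<bar>real (count_list xs z) / N - pmf q z\<bar> > \<delta>}
      = measure_pmf.prob (map_pmf (\<lambda>xs. count_list xs z) (iid N q)) {k. \<bar>real k / N - pmf q z\<bar> > \<delta>}"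
    by (simp add: vimage_def)
  also have "\<dots> = measure_pmf.prob (binomial_pmf N (pmf q z)) {k. \<bar>real k / N - pmf q z\<bar> > \<delta>}"
    by (simp add: iid_count_binomial)
  also have "\<dots> \<le> measure_pmf.prob (binomial_pmf N (pmf q z)) {k. \<bar>real k / N - pmf q z\<bar> \<ge> \<delta>}"
    by (intro measure_pmf.finite_measure_mono) auto
  also have "\<dots> \<le> 2 * exp (-2 * real N * \<delta>\<^sup>2)"
    using binomial_distribution.prob_abs_ge'[of "pmf q z" N \<delta>] assms by (simp add: binomial_distribution_def pmf_le_1)
  finally show ?thesis .
qed

definition mass :: "'z \<Rightarrow> ('z \<times> real) list \<Rightarrow> real" where
  "mass z P = sum_list (map snd (filter (\<lambda>p. fst p = z) P))"

lemma mass_Nil[simp]: "mass z [] = 0" by (simp add: mass_def)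
lemma mass_Cons[simp]: "mass z (p # P) = (if fst p = z then snd p else 0) + mass z P"
  by (simp add: mass_def)
lemma mass_append[simp]: "mass z (P @ Q) = mass z P + mass z Q"
  by (simp add: mass_def)
lemma mass_map: "mass z (map (\<lambda>y. (y, w y)) xs) = real (count_list xs z) * w z"
  by (induction xs) (auto simp: algebra_simps)
lemma mass_map0: "mass z (map (\<lambda>x. ([x], W x)) xs) = (if length z = 1 then real (count_list xs (hd z)) * W (hd z) else 0)"
proof (cases "length z = 1")
  case True
  then obtain y where z: "z = [y]" by (metis length_0_conv length_Suc_conv One_nat_def)
  show ?thesis unfolding z by (induction xs) (auto simp: algebra_simps)
next
  case False
  then show ?thesis by (induction xs) auto
qed
lemma mass_out: "z \<notin> fst ` set P \<Longrightarrow> mass z P = 0"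
  by (induction P) auto

lemma sum_list_pool:
  assumes "finite A" "fst ` set P \<subseteq> A"
  shows "(\<Sum>(z, w)\<leftarrow>P. w * g z) = (\<Sum>z\<in>A. g z * mass z P)"
  using assms(2)
proof (induction P)
  case Nil then show ?case by simp
next
  case (Cons p P)
  obtain y v where p: "p = (y, v)" by force
  have y: "y \<in> A" using Cons.prems p by auto
  have "(\<Sum>z\<in>A. g z * mass z (p # P)) = (\<Sum>z\<in>A. g z * (if z = y then v else 0)) + (\<Sum>z\<in>A. g z * mass z P)"
    by (auto simp: p algebra_simps sum.distrib intro!: sum.cong)
  also have "(\<Sum>z\<in>A. g z * (if z = y then v else 0)) = v * g y"
  proof -
    have "(\<Sum>z\<in>A. g z * (if z = y then v else 0)) = (\<Sum>z\<in>A. (if z = y then g y * v else 0))"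
      by (intro sum.cong) auto
    also have "\<dots> = v * g y" using y assms(1) by (simp add: mult.commute)
    finally show ?thesis .
  qed
  finally show ?case using Cons by (simp add: p)
qed

lemma sum_list_pool1:
  assumes "finite A" "fst ` set P \<subseteq> A"
  shows "(\<Sum>(z, w)\<leftarrow>P. w) = (\<Sum>z\<in>A. mass z P)"
  using sum_list_pool[OF assms, of "\<lambda>_. 1"] by simp

lemma sum_list_div: "(\<Sum>x\<leftarrow>xs. f x / c) = (\<Sum>x\<leftarrow>xs. f x) / (c::real)"
  by (induction xs) (auto simp: add_divide_distrib)

lemma resample_wf:
  fixes P :: "('z \<times> real) list"
  assumes "\<forall>p\<in>set P. snd p \<ge> 0" "sum_list (map snd P) > 0"
  shows "pmf_of_list_wf (map (\<lambda>(z, w). (z, w / sum_list (map snd P))) P)"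
proof (rule pmf_of_list_wfI)
  show "x \<in> set (map snd (map (\<lambda>(z, w). (z, w / sum_list (map snd P))) P)) \<Longrightarrow> 0 \<le> x" for x
  proof -
    assume "x \<in> set (map snd (map (\<lambda>(z, w). (z, w / sum_list (map snd P))) P))"
    then obtain a b where "(a, b) \<in> set P" "x = b / sum_list (map snd P)" by auto
    moreover have "0 \<le> b" using assms(1) \<open>(a, b) \<in> set P\<close> by force
    ultimately show "0 \<le> x" using assms(2) by (simp add: divide_nonneg_pos)
  qed
  have "sum_list (map snd (map (\<lambda>(z, w). (z, w / sum_list (map snd P))) P)) = (\<Sum>p\<leftarrow>P. snd p / sum_list (map snd P))"
    by (simp add: case_prod_unfold o_def)
  also have "\<dots> = 1" using assms(2) by (simp add: sum_list_div)
  finally show "sum_list (map snd (map (\<lambda>(z, w). (z, w / sum_list (map snd P))) P)) = 1" .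
qed

lemma pmf_resample:
  fixes P :: "('z \<times> real) list"
  assumes "\<forall>p\<in>set P. snd p \<ge> 0" "sum_list (map snd P) > 0"
  shows "pmf (resample P) u = mass u P / sum_list (map snd P)"
proof -
  have "pmf (resample P) u = sum_list (map snd (filter (\<lambda>x. fst x = u) (map (\<lambda>(z, w). (z, w / sum_list (map snd P))) P)))"
    unfolding resample_def by (rule pmf_pmf_of_list[OF resample_wf[OF assms]])
  also have "\<dots> = (\<Sum>p\<leftarrow>filter (\<lambda>x. fst x = u) P. snd p / sum_list (map snd P))"
    by (simp add: filter_map o_def case_prod_unfold)
  also have "\<dots> = mass u P / sum_list (map snd P)"
    by (simp add: sum_list_div mass_def)
  finally show ?thesis .
qed

lemma set_pmf_resample:
  fixes P :: "('z \<times> real) list"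
  assumes "\<forall>p\<in>set P. snd p \<ge> 0" "sum_list (map snd P) > 0"
  shows "set_pmf (resample P) \<subseteq> fst ` set P"
  using set_pmf_of_list[OF resample_wf[OF assms]] unfolding resample_def by force

lemma pmf_kid:
  "pmf (bind_pmf q (\<lambda>u. map_pmf (\<lambda>x. u @ [x]) (K u))) z =
     (if z = [] then 0 else pmf q (butlast z) * pmf (K (butlast z)) (last z))"
proof -
  have e: "pmf (map_pmf (\<lambda>x. u @ [x]) (K u)) z =
      (if z = [] then 0 else pmf (K (butlast z)) (last z) * indicator {butlast z} u)" for u
  proof (cases "z = []")
    case True then show ?thesis by (simp add: pmf_map vimage_def)
  next
    case False
    then obtain ys y where z: "z = ys @ [y]" by (metis rev_exhaust)
    have "(\<lambda>x. u @ [x]) -` {z} = (if u = ys then {y} else {})" unfolding z by auto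
    then show ?thesis by (simp add: pmf_map z measure_pmf_single)
  qed
  show ?thesis
    unfolding pmf_bind e by (simp add: measure_pmf_single mult.commute)
qed

lemma pprob_snoc: "pprob K (ys @ [y]) = pprob K ys * pmf (K ys) y"
proof -
  have "pprob K (ys @ [y]) = (\<Prod>i<Suc (length ys). pmf (K (take i (ys @ [y]))) ((ys @ [y]) ! i))"
    by (simp add: pprob_def)
  also have "\<dots> = (\<Prod>i<length ys. pmf (K (take i (ys @ [y]))) ((ys @ [y]) ! i)) * pmf (K ys) y"
    by (simp add: prod.lessThan_Suc)
  also have "(\<Prod>i<length ys. pmf (K (take i (ys @ [y]))) ((ys @ [y]) ! i)) = pprob K ys"
    unfolding pprob_def by (intro prod.cong) (auto simp: nth_append)
  finally show ?thesis .
qed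

lemma pprob_bl: "z \<noteq> [] \<Longrightarrow> pprob K z = pprob K (butlast z) * pmf (K (butlast z)) (last z)"
  by (metis pprob_snoc append_butlast_last_id)

lemma prob_bind_bound:
  assumes "\<rho> \<ge> 0" "\<And>a. a \<in> set_pmf A \<Longrightarrow> Gd a \<Longrightarrow> measure_pmf.prob (C a) E \<le> \<rho>"
  shows "measure_pmf.prob (bind_pmf A C) E \<le> \<rho> + measure_pmf.prob A {a. \<not> Gd a}"
proof -
  have "emeasure (measure_pmf (bind_pmf A C)) E = (\<integral>\<^sup>+a. emeasure (C a) E \<partial>A)" by simp
  also have "\<dots> \<le> (\<integral>\<^sup>+a. (ennreal \<rho> + indicator {a. \<not> Gd a} a) \<partial>A)"
  proof (rule nn_integral_mono_AE)
    show "AE a in measure_pmf A. emeasure (measure_pmf (C a)) E \<le> ennreal \<rho> + indicator {a. \<not> Gd a} a"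
      unfolding AE_measure_pmf_iff
    proof
      fix a assume a: "a \<in> set_pmf A"
      show "emeasure (measure_pmf (C a)) E \<le> ennreal \<rho> + indicator {a. \<not> Gd a} a"
      proof (cases "Gd a")
        case True
        then have "emeasure (measure_pmf (C a)) E \<le> ennreal \<rho>"
          using assms(2)[OF a True] by (simp add: measure_pmf.emeasure_eq_measure ennreal_leI)
        then show ?thesis by (simp add: add_increasing2)
      next
        case False
        have "emeasure (measure_pmf (C a)) E \<le> 1"
          by (simp add: measure_pmf.emeasure_le_1)
        also have "\<dots> \<le> ennreal \<rho> + indicator {a. \<not> Gd a} a" using False by simp
        finally show ?thesis .
      qed
    qed
  qed
  also have "\<dots> = ennreal \<rho> + emeasure (measure_pmf A) {a. \<not> Gd a}"
    by (subst nn_integral_add) (auto simp: measure_pmf.emeasure_space_1)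
  also have "\<dots> = ennreal (\<rho> + measure_pmf.prob A {a. \<not> Gd a})"
    using assms(1) by (simp add: measure_pmf.emeasure_eq_measure ennreal_plus)
  finally have "ennreal (measure_pmf.prob (bind_pmf A C) E) \<le> ennreal (\<rho> + measure_pmf.prob A {a. \<not> Gd a})"
    by (simp only: measure_pmf.emeasure_eq_measure)
  then show ?thesis
    using assms(1) by (subst (asm) ennreal_le_iff) auto
qed

lemma finite_prefixes: "finite (prefixes T :: 'a::finite list set)"
proof -
  have "prefixes T \<subseteq> {xs :: 'a list. set xs \<subseteq> UNIV \<and> length xs \<le> T + 1}"
    by (auto simp: prefixes_def)
  moreover have "finite {xs :: 'a list. set xs \<subseteq> UNIV \<and> length xs \<le> T + 1}"
    by (rule finite_lists_length_le) simp
  ultimately show ?thesis by (rule finite_subset)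
qed

lemma exp_lim: "d > 0 \<Longrightarrow> ((\<lambda>N. 2 * exp (-2 * real N * d\<^sup>2)) \<longlongrightarrow> 0) sequentially"
proof -
  assume d: "d > 0"
  have e: "exp (-2 * real N * d\<^sup>2) = exp (-2 * d\<^sup>2) ^ N" for N
    by (metis exp_of_nat_mult mult.commute mult.left_commute)
  have "((\<lambda>N. exp (-2 * d\<^sup>2) ^ N) \<longlongrightarrow> 0) sequentially"
    by (rule LIMSEQ_power_zero) (use d in simp)
  then show ?thesis unfolding e using tendsto_mult_right_zero by blast
qed

lemma gen_Suc_elim:
  assumes "s \<in> set_pmf (pbsmc_gen K r \<alpha> upd b0 N (Suc t))"
  shows "\<exists>P b B S. (P, b) \<in> set_pmf (pbsmc_gen K r \<alpha> upd b0 N t) \<and>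
     B \<in> set_pmf (iid N (bind_pmf (resample P) (\<lambda>u. map_pmf (\<lambda>x. u @ [x]) (K u)))) \<and>
     S \<in> set_pmf (iid (N * Suc t) (resample P)) \<and>
     s = (map (\<lambda>z. (z, \<alpha> (Suc t) * Fcorr r \<alpha> b (upd (Suc t) P b) (Suc t) z)) B @
          map (\<lambda>z. (z, (1 - \<alpha> (Suc t)) * Fcorr r \<alpha> b (upd (Suc t) P b) (Suc t) z / real (Suc t))) S,
          upd (Suc t) P b)"
proof -
  obtain a where a: "a \<in> set_pmf (pbsmc_gen K r \<alpha> upd b0 N t)"
    and sa: "s \<in> set_pmf ((\<lambda>(P, b).
       let b' = upd (Suc t) P b; q = resample P in
       bind_pmf (iid N (bind_pmf q (\<lambda>u. map_pmf (\<lambda>x. u @ [x]) (K u)))) (\<lambda>B.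
       map_pmf (\<lambda>S.
         (map (\<lambda>z. (z, \<alpha> (Suc t) * Fcorr r \<alpha> b b' (Suc t) z)) B @
          map (\<lambda>z. (z, (1 - \<alpha> (Suc t)) * Fcorr r \<alpha> b b' (Suc t) z / real (Suc t))) S, b'))
         (iid (N * Suc t) q))) a)"
    using assms by (simp only: pbsmc_gen.simps set_bind_pmf) blast
  obtain P b where ab: "a = (P, b)" by force
  show ?thesis using a sa unfolding ab Let_def prod.case set_bind_pmf set_map_pmf by blast
qed

definition Lt :: "('a list \<Rightarrow> 'a pmf) \<Rightarrow> ('a list \<Rightarrow> real) \<Rightarrow> (nat \<Rightarrow> real) \<Rightarrow> nat \<Rightarrow> 'a list \<Rightarrow> real" where
  "Lt K r \<beta>s t z = (if 1 \<le> length z \<and> length z \<le> t + 1 then pprob K z * r z powr \<beta>s t else 0)"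

lemma sum_list_pos:
  fixes P :: "('z \<times> real) list"
  shows "P \<noteq> [] \<Longrightarrow> \<forall>p\<in>set P. snd p > 0 \<Longrightarrow> sum_list (map snd P) > 0"
proof (induction P)
  case Nil then show ?case by simp
next
  case (Cons p P)
  then show ?case by (cases "P = []") (auto intro: add_pos_pos)
qed


lemma inner_bound:
  fixes \<mu> q :: "'z pmf" and Fw :: "'z \<Rightarrow> real"
  assumes N: "N > 0" and k: "k > 0" and a: "0 < a" "a < 1" and Fb: "\<bar>Fw z\<bar> \<le> Fb" "Fb > 0"
    and e: "\<epsilon> > 0" and hm: "\<bar>Fw z * (a * pmf \<mu> z + (1 - a) * pmf q z) - m\<bar> \<le> \<epsilon> / 2"
  shows "measure_pmf.prob (bind_pmf (iid N \<mu>) (\<lambda>B. map_pmf (\<lambda>S.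
            (map (\<lambda>z. (z, a * Fw z)) B @ map (\<lambda>z. (z, (1 - a) * Fw z / real k)) S, b')) (iid (N * k) q)))
          {s. dist (mass z (fst s) / real N) m > \<epsilon>} \<le> 4 * exp (-2 * real N * (\<epsilon> / (4 * Fb))\<^sup>2)"
proof -
  define \<delta> where "\<delta> = \<epsilon> / (4 * Fb)"
  have d: "\<delta> > 0" unfolding \<delta>_def using e Fb by simp
  have Nk: "N * k > 0" using N k by simp
  have ex: "2 * exp (-2 * real (N * k) * \<delta>\<^sup>2) \<le> 2 * exp (-2 * real N * \<delta>\<^sup>2)"
  proof -
    have "N \<le> N * k" using k by simp
    then have "real N \<le> real (N * k)" by (simp only: of_nat_le_iff)
    then have "real N * \<delta>\<^sup>2 \<le> real (N * k) * \<delta>\<^sup>2" by (intro mult_right_mono) auto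
    then show ?thesis by simp
  qed
  let ?E = "{s. dist (mass z (fst s) / real N) m > \<epsilon>}"
  have "measure_pmf.prob (bind_pmf (iid N \<mu>) (\<lambda>B. map_pmf (\<lambda>S.
            (map (\<lambda>z. (z, a * Fw z)) B @ map (\<lambda>z. (z, (1 - a) * Fw z / real k)) S, b')) (iid (N * k) q))) ?E
      \<le> 2 * exp (-2 * real N * \<delta>\<^sup>2) + measure_pmf.prob (iid N \<mu>) {B. \<not> \<bar>real (count_list B z) / N - pmf \<mu> z\<bar> \<le> \<delta>}"
  proof (rule prob_bind_bound)
    fix B assume GB: "\<bar>real (count_list B z) / N - pmf \<mu> z\<bar> \<le> \<delta>"
    have "measure_pmf.prob (map_pmf (\<lambda>S. (map (\<lambda>z. (z, a * Fw z)) B @ map (\<lambda>z. (z, (1 - a) * Fw z / real k)) S, b')) (iid (N * k) q)) ?E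
        \<le> measure_pmf.prob (iid (N * k) q) {S. \<bar>real (count_list S z) / real (N * k) - pmf q z\<bar> > \<delta>}"
    proof (simp only: measure_map_pmf, rule prob_mono_supp)
      fix S assume "S \<in> (\<lambda>S. (map (\<lambda>z. (z, a * Fw z)) B @ map (\<lambda>z. (z, (1 - a) * Fw z / real k)) S, b')) -` ?E"
      then have big: "dist (mass z (map (\<lambda>z. (z, a * Fw z)) B @ map (\<lambda>z. (z, (1 - a) * Fw z / real k)) S) / real N) m > \<epsilon>"
        by simp
      show "S \<in> {S. \<bar>real (count_list S z) / real (N * k) - pmf q z\<bar> > \<delta>}"
      proof (rule ccontr)
        assume "S \<notin> {S. \<bar>real (count_list S z) / real (N * k) - pmf q z\<bar> > \<delta>}"
        then have GS: "\<bar>real (count_list S z) / real (N * k) - pmf q z\<bar> \<le> \<delta>" by simp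
        define x where "x = real (count_list B z) / N - pmf \<mu> z"
        define y where "y = real (count_list S z) / real (N * k) - pmf q z"
        have eq: "mass z (map (\<lambda>z. (z, a * Fw z)) B @ map (\<lambda>z. (z, (1 - a) * Fw z / real k)) S) / real N
            = Fw z * (a * pmf \<mu> z + (1 - a) * pmf q z) + Fw z * (a * x + (1 - a) * y)"
          unfolding mass_append mass_map x_def y_def using N k by (simp add: field_simps)
        have "\<bar>a * x + (1 - a) * y\<bar> \<le> a * \<bar>x\<bar> + (1 - a) * \<bar>y\<bar>"
          using a by (metis abs_mult abs_of_pos abs_triangle_ineq diff_gt_0_iff_gt)
        also have "\<dots> \<le> a * \<delta> + (1 - a) * \<delta>"
          using GB GS a unfolding x_def y_def by (intro add_mono mult_left_mono) auto
        also have "\<dots> = \<delta>" by (simp add: algebra_simps)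
        finally have xy: "\<bar>a * x + (1 - a) * y\<bar> \<le> \<delta>" .
        have "\<bar>Fw z * (a * x + (1 - a) * y)\<bar> \<le> Fb * \<delta>"
          unfolding abs_mult using Fb xy by (intro mult_mono) auto
        also have "Fb * \<delta> = \<epsilon> / 4" unfolding \<delta>_def using Fb by simp
        finally have "\<bar>Fw z * (a * x + (1 - a) * y)\<bar> \<le> \<epsilon> / 4" .
        then have "dist (mass z (map (\<lambda>z. (z, a * Fw z)) B @ map (\<lambda>z. (z, (1 - a) * Fw z / real k)) S) / real N) m \<le> \<epsilon>"
          unfolding eq dist_real_def using hm e by linarith
        then show False using big by linarith
      qed
    qed
    also have "\<dots> \<le> 2 * exp (-2 * real (N * k) * \<delta>\<^sup>2)" by (rule iid_hoeffding[OF Nk d])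
    also have "\<dots> \<le> 2 * exp (-2 * real N * \<delta>\<^sup>2)" by (rule ex)
    finally show "measure_pmf.prob (map_pmf (\<lambda>S. (map (\<lambda>z. (z, a * Fw z)) B @ map (\<lambda>z. (z, (1 - a) * Fw z / real k)) S, b')) (iid (N * k) q)) ?E
        \<le> 2 * exp (-2 * real N * \<delta>\<^sup>2)" .
  qed simp
  also have "measure_pmf.prob (iid N \<mu>) {B. \<not> \<bar>real (count_list B z) / N - pmf \<mu> z\<bar> \<le> \<delta>}
      \<le> 2 * exp (-2 * real N * \<delta>\<^sup>2)"
    using iid_hoeffding[OF N d, of \<mu> z] by (simp add: not_le)
  finally show ?thesis unfolding \<delta>_def by simp
qed

context
  fixes K :: "'a::finite list \<Rightarrow> 'a pmf" and r :: "'a list \<Rightarrow> real" and T :: nat and Rmin Rmax :: real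
    and \<alpha> :: "nat \<Rightarrow> real" and upd :: "nat \<Rightarrow> ('a list \<times> real) list \<Rightarrow> real \<Rightarrow> real"
    and \<beta>s :: "nat \<Rightarrow> real" and C :: real
  assumes Rmin: "0 < Rmin"
    and r_bounds: "\<And>z. z \<in> prefixes T \<Longrightarrow> Rmin \<le> r z \<and> r z \<le> Rmax"
    and alpha: "\<And>t. 1 \<le> t \<Longrightarrow> t \<le> T \<Longrightarrow> 0 < \<alpha> t \<and> \<alpha> t < 1"
    and Cnn: "0 \<le> C"
    and upd_bound: "\<And>s P b. 1 \<le> s \<Longrightarrow> s \<le> T \<Longrightarrow> fst ` set P \<subseteq> prefixes T \<Longrightarrow>
          \<bar>upd s P b - \<beta>s s\<bar> \<le> \<bar>b - \<beta>s (s - 1)\<bar> + C / real (length P)"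
begin

abbreviation "G N t \<equiv> pbsmc_gen K r \<alpha> upd (\<beta>s 0) N t"

lemma r_pos: "z \<in> prefixes T \<Longrightarrow> r z > 0"
  using r_bounds[of z] Rmin by linarith

lemma rsc_bl_pos: "z \<in> prefixes T \<Longrightarrow> rsc r (butlast z) > 0"
proof (cases "butlast z = []")
  case True then show ?thesis by (simp add: rsc_def)
next
  case False
  assume z: "z \<in> prefixes T"
  then have "butlast z \<in> prefixes T" using False by (cases z rule: rev_cases) (auto simp: prefixes_def Suc_le_eq)
  then show ?thesis using False r_pos by (simp add: rsc_def)
qed

lemma Fcorr_pos:
  assumes "1 \<le> t" "t \<le> T" "z \<in> prefixes T" "length z \<le> t + 1"
  shows "Fcorr r \<alpha> bp bc t z > 0"
proof -
  define q where "q = r z / rsc r (butlast z)"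
  have q: "q > 0" unfolding q_def using r_pos[OF assms(3)] rsc_bl_pos[OF assms(3)] by simp
  have rz: "r z > 0" using r_pos[OF assms(3)] .
  have a: "0 < \<alpha> t" "\<alpha> t < 1" using alpha assms by auto
  have num: "q powr bp * r z powr (bc - bp) > 0" using q rz by simp
  have den: "\<alpha> t * (if 2 \<le> length z then 1 else 0) + (1 - \<alpha> t) * q powr bp * (if length z \<le> t then 1 else 0) > 0"
  proof (cases "2 \<le> length z")
    case True
    have h: "0 \<le> (1 - \<alpha> t) * q powr bp" using a by simp
    show ?thesis using True a h by (simp add: add_pos_nonneg)
  next
    case False
    then have "length z \<le> t" using assms(1,3) by (auto simp: prefixes_def)
    then show ?thesis using False a q by simp
  qed
  show ?thesis unfolding Fcorr_def Let_def q_def[symmetric] using num den by simp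
qed

lemma supp:
  "t \<le> T \<Longrightarrow> s \<in> set_pmf (G N t) \<Longrightarrow> length (fst s) = N * (t + 1) \<and>
     (\<forall>p\<in>set (fst s). 1 \<le> length (fst p) \<and> length (fst p) \<le> t + 1 \<and> snd p > 0) \<and>
     \<bar>snd s - \<beta>s t\<bar> \<le> C * t / N"
proof (induction t arbitrary: s)
  case 0
  then obtain xs where xs: "xs \<in> set_pmf (iid N (K []))"
    and s: "s = (map (\<lambda>x. ([x], r [x] powr \<beta>s 0)) xs, \<beta>s 0)" by auto
  have "[x] \<in> prefixes T" for x :: 'a by (simp add: prefixes_def)
  then have "r [x] > 0" for x using r_pos by blast
  then have rp: "r [x] \<noteq> 0" for x by (metis less_irrefl)
  then show ?case using set_pmf_iid[OF xs] s by (auto simp: rp)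
next
  case (Suc t)
  from gen_Suc_elim[OF Suc.prems(2)] obtain P b B S where
    Pb: "(P, b) \<in> set_pmf (G N t)"
    and B: "B \<in> set_pmf (iid N (bind_pmf (resample P) (\<lambda>u. map_pmf (\<lambda>x. u @ [x]) (K u))))"
    and S: "S \<in> set_pmf (iid (N * Suc t) (resample P))"
    and s: "s = (map (\<lambda>z. (z, \<alpha> (Suc t) * Fcorr r \<alpha> b (upd (Suc t) P b) (Suc t) z)) B @
          map (\<lambda>z. (z, (1 - \<alpha> (Suc t)) * Fcorr r \<alpha> b (upd (Suc t) P b) (Suc t) z / real (Suc t))) S,
          upd (Suc t) P b)" by blast
  have tT: "t \<le> T" "Suc t \<le> T" using Suc.prems by auto
  note IH = Suc.IH[OF tT(1) Pb, simplified]
  have Ppref: "fst ` set P \<subseteq> prefixes T" using IH tT by (force simp: prefixes_def)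
  have lenP: "length P = N * (t + 1)" using IH by simp
  have ub: "\<bar>upd (Suc t) P b - \<beta>s (Suc t)\<bar> \<le> \<bar>b - \<beta>s t\<bar> + C / real (length P)"
    using upd_bound[of "Suc t" P b] tT Ppref by simp
  have snd_ok: "\<bar>upd (Suc t) P b - \<beta>s (Suc t)\<bar> \<le> C * real (Suc t) / real N"
  proof (cases "N = 0")
    case True then show ?thesis using ub IH lenP by simp
  next
    case False
    have "C / real (length P) \<le> C / real N"
      using False Cnn lenP by (intro divide_left_mono) (auto intro!: mult_pos_pos add_pos_nonneg)
    moreover have "C * real (Suc t) / real N = C * real t / real N + C / real N"
      by (simp add: add_divide_distrib algebra_simps)
    ultimately show ?thesis using ub IH by linarith
  qed
  show ?case
  proof (cases "N = 0")
    case True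
    then have "B = []" "S = []" using set_pmf_iid[OF B] set_pmf_iid[OF S] by auto
    then show ?thesis using s snd_ok True by simp
  next
    case False
    have pos: "\<forall>p\<in>set P. snd p > 0" using IH by auto
    have Pne: "P \<noteq> []" using lenP False by auto
    have wf1: "\<forall>p\<in>set P. snd p \<ge> 0" using pos by auto
    have wf2: "sum_list (map snd P) > 0" using sum_list_pos[OF Pne pos] .
    have sq: "set_pmf (resample P) \<subseteq> fst ` set P" by (rule set_pmf_resample[OF wf1 wf2])
    have lenq: "\<forall>u\<in>set_pmf (resample P). 1 \<le> length u \<and> length u \<le> t + 1"
      using sq IH by force
    have Bel: "\<forall>z\<in>set B. 2 \<le> length z \<and> length z \<le> t + 2"
      using set_pmf_iid[OF B] lenq by force
    have Sel: "\<forall>z\<in>set S. 1 \<le> length z \<and> length z \<le> t + 1"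
      using set_pmf_iid[OF S] lenq by force
    have a: "0 < \<alpha> (Suc t)" "\<alpha> (Suc t) < 1" using alpha[of "Suc t"] tT by auto
    have Fp: "Fcorr r \<alpha> b (upd (Suc t) P b) (Suc t) z > 0" if "1 \<le> length z" "length z \<le> t + 2" for z
      using Fcorr_pos[of "Suc t" z] that tT by (simp add: prefixes_def)
    have "\<forall>p\<in>set (fst s). 1 \<le> length (fst p) \<and> length (fst p) \<le> Suc t + 1 \<and> snd p > 0"
    proof
      fix p assume "p \<in> set (fst s)"
      then consider z where "z \<in> set B" "p = (z, \<alpha> (Suc t) * Fcorr r \<alpha> b (upd (Suc t) P b) (Suc t) z)"
        | z where "z \<in> set S" "p = (z, (1 - \<alpha> (Suc t)) * Fcorr r \<alpha> b (upd (Suc t) P b) (Suc t) z / real (Suc t))"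
        using s by auto
      then show "1 \<le> length (fst p) \<and> length (fst p) \<le> Suc t + 1 \<and> snd p > 0"
      proof cases
        case 1 then show ?thesis using Bel Fp a by auto
      next
        case 2
        have "1 \<le> length z" "length z \<le> t + 2" using 2 Sel by auto
        then show ?thesis using 2 Sel Fp[of z] a by auto
      qed
    qed
    moreover have "length (fst s) = N * (Suc t + 1)"
      using s set_pmf_iid[OF B] set_pmf_iid[OF S] by simp
    ultimately show ?thesis using s snd_ok by simp
  qed
qed

lemma key_identity:
  assumes tT: "Suc t \<le> T" and z1: "1 \<le> length z" and z2: "length z \<le> t + 2" and Z: "Z > 0"
  shows "Fcorr r \<alpha> (\<beta>s t) (\<beta>s (Suc t)) (Suc t) z *
      (\<alpha> (Suc t) * (Lt K r \<beta>s t (butlast z) / Z * pmf (K (butlast z)) (last z)) +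
       (1 - \<alpha> (Suc t)) * (Lt K r \<beta>s t z / Z)) = Lt K r \<beta>s (Suc t) z / Z"
proof -
  define b where "b = \<beta>s t"
  define b' where "b' = \<beta>s (Suc t)"
  define a where "a = \<alpha> (Suc t)"
  define R where "R = r z"
  define Rb where "Rb = rsc r (butlast z)"
  define q where "q = R / Rb"
  define Dn where "Dn = a * (if 2 \<le> length z then 1 else 0) + (1 - a) * q powr b * (if length z \<le> Suc t then 1 else 0)"
  have zp: "z \<in> prefixes T" using assms by (simp add: prefixes_def)
  have R: "R > 0" unfolding R_def using r_pos[OF zp] .
  have Rb: "Rb > 0" unfolding Rb_def using rsc_bl_pos[OF zp] .
  have q: "q > 0" unfolding q_def using R Rb by simp
  have aa: "0 < a" "a < 1" unfolding a_def using alpha[of "Suc t"] tT by auto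
  have Dn: "Dn > 0"
  proof (cases "2 \<le> length z")
    case True
    have h: "0 \<le> (1 - a) * q powr b" using aa by simp
    show ?thesis unfolding Dn_def using True aa h by (simp add: add_pos_nonneg)
  next
    case False
    then have "length z \<le> Suc t" using z1 by simp
    then show ?thesis unfolding Dn_def using False aa q by simp
  qed
  have F: "Fcorr r \<alpha> b b' (Suc t) z = q powr b * R powr (b' - b) / Dn"
    unfolding Fcorr_def Let_def Dn_def q_def R_def Rb_def a_def by simp
  have zne: "z \<noteq> []" using z1 by auto
  have pz: "pprob K z = pprob K (butlast z) * pmf (K (butlast z)) (last z)" by (rule pprob_bl[OF zne])
  have LA: "Lt K r \<beta>s t (butlast z) * pmf (K (butlast z)) (last z) = (if 2 \<le> length z then pprob K z * Rb powr b else 0)"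
  proof (cases "2 \<le> length z")
    case True
    then have bne: "butlast z \<noteq> []" by (cases z rule: rev_cases) auto
    have "Lt K r \<beta>s t (butlast z) = pprob K (butlast z) * r (butlast z) powr b"
      unfolding Lt_def b_def using True z2 by auto
    moreover have "Rb = r (butlast z)" unfolding Rb_def rsc_def using bne by simp
    ultimately show ?thesis using True pz by simp
  next
    case False
    then have "butlast z = []" using z1 by (cases z rule: rev_cases) (auto simp: Suc_le_eq)
    then show ?thesis using False by (simp add: Lt_def)
  qed
  have LB: "Lt K r \<beta>s t z = (if length z \<le> Suc t then pprob K z * R powr b else 0)"
    unfolding Lt_def R_def b_def using z1 by auto
  have LC: "Lt K r \<beta>s (Suc t) z = pprob K z * R powr b'"
    unfolding Lt_def R_def b'_def using z1 z2 by auto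
  have qpow: "q powr b * Rb powr b = R powr b"
    unfolding q_def using R Rb by (simp add: powr_divide)
  have Rpow: "R powr b * R powr (b' - b) = R powr b'"
    using R by (simp add: powr_add[symmetric])
  have inner: "a * (Lt K r \<beta>s t (butlast z) / Z * pmf (K (butlast z)) (last z)) + (1 - a) * (Lt K r \<beta>s t z / Z)
      = pprob K z * Rb powr b * Dn / Z"
  proof -
    have "a * (Lt K r \<beta>s t (butlast z) / Z * pmf (K (butlast z)) (last z)) + (1 - a) * (Lt K r \<beta>s t z / Z)
        = (a * (Lt K r \<beta>s t (butlast z) * pmf (K (butlast z)) (last z)) + (1 - a) * Lt K r \<beta>s t z) / Z"
      using Z by (simp add: field_simps)
    also have "\<dots> = (a * (if 2 \<le> length z then pprob K z * Rb powr b else 0) +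
        (1 - a) * (if length z \<le> Suc t then pprob K z * (q powr b * Rb powr b) else 0)) / Z"
      unfolding LA LB qpow ..
    also have "\<dots> = pprob K z * Rb powr b * Dn / Z"
      unfolding Dn_def by (simp add: algebra_simps)
    finally show ?thesis .
  qed
  have "Fcorr r \<alpha> b b' (Suc t) z * (pprob K z * Rb powr b * Dn / Z)
      = pprob K z * ((q powr b * Rb powr b) * R powr (b' - b)) / Z"
    unfolding F using Dn by (simp add: field_simps)
  also have "\<dots> = pprob K z * R powr b' / Z" unfolding qpow Rpow ..
  finally show ?thesis
    using inner LC unfolding a_def b_def b'_def by simp
qed

lemma Fcorr_cont:
  assumes tT: "Suc t \<le> T" and zp: "z \<in> prefixes T" and z2: "length z \<le> t + 2"
  shows "isCont (\<lambda>p. Fcorr r \<alpha> (fst p) (snd p) (Suc t) z) (x0, y0)"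
proof -
  define q where "q = r z / rsc r (butlast z)"
  have q: "q > 0" unfolding q_def using r_pos[OF zp] rsc_bl_pos[OF zp] by simp
  have rz: "r z > 0" using r_pos[OF zp] .
  have aa: "0 < \<alpha> (Suc t)" "\<alpha> (Suc t) < 1" using alpha[of "Suc t"] tT by auto
  have z1: "1 \<le> length z" using zp by (simp add: prefixes_def)
  have Dn0: "\<alpha> (Suc t) * (if 2 \<le> length z then 1 else 0) + (1 - \<alpha> (Suc t)) * q powr x0 * (if length z \<le> Suc t then 1 else 0) > 0"
  proof (cases "2 \<le> length z")
    case True
    have h: "0 \<le> (1 - \<alpha> (Suc t)) * q powr x0" using aa by simp
    show ?thesis using True aa h by (simp add: add_pos_nonneg)
  next
    case False
    then have "length z \<le> Suc t" using z1 by simp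
    then show ?thesis using False aa q by simp
  qed
  then have Dn: "\<alpha> (Suc t) * (if 2 \<le> length z then 1 else 0) + (1 - \<alpha> (Suc t)) * q powr x0 * (if length z \<le> Suc t then 1 else 0) \<noteq> 0"
    by linarith
  show ?thesis
    unfolding Fcorr_def Let_def q_def[symmetric]
    by (intro continuous_intros) (use q rz Dn in auto)
qed

lemma supp_pref: "t \<le> T \<Longrightarrow> s \<in> set_pmf (G N t) \<Longrightarrow> fst ` set (fst s) \<subseteq> prefixes T"
  using supp[of t s N] by (force simp: prefixes_def)

lemma upd_close:
  assumes tT: "Suc t \<le> T" and s: "s \<in> set_pmf (G N t)"
  shows "\<bar>upd (Suc t) (fst s) (snd s) - \<beta>s (Suc t)\<bar> \<le> C * real (Suc t) / real N"
proof -
  note IH = supp[OF _ s] tT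
  have Ppref: "fst ` set (fst s) \<subseteq> prefixes T" using supp_pref[OF _ s] tT by simp
  have lenP: "length (fst s) = N * (t + 1)" using IH by simp
  have ub: "\<bar>upd (Suc t) (fst s) (snd s) - \<beta>s (Suc t)\<bar> \<le> \<bar>snd s - \<beta>s t\<bar> + C / real (length (fst s))"
    using upd_bound[of "Suc t" "fst s" "snd s"] tT Ppref by simp
  have sb: "\<bar>snd s - \<beta>s t\<bar> \<le> C * real t / real N" using IH by simp
  show ?thesis
  proof (cases "N = 0")
    case True then show ?thesis using ub sb lenP by simp
  next
    case False
    have "C / real (length (fst s)) \<le> C / real N"
      using False Cnn lenP by (intro divide_left_mono) (auto intro!: mult_pos_pos add_pos_nonneg)
    moreover have "C * real (Suc t) / real N = C * real t / real N + C / real N"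
      by (simp add: add_divide_distrib algebra_simps)
    ultimately show ?thesis using ub sb by linarith
  qed
qed

lemma cip_snd: "t \<le> T \<Longrightarrow> cip (\<lambda>N. G N t) (\<lambda>N s. snd s) (\<beta>s t)"
  by (rule cip_det[where e = "\<lambda>N. C * real t / real N"])
     (auto simp: dist_real_def intro!: always_eventually lim_const_over_n dest: supp)

lemma cip_upd: "Suc t \<le> T \<Longrightarrow> cip (\<lambda>N. G N t) (\<lambda>N s. upd (Suc t) (fst s) (snd s)) (\<beta>s (Suc t))"
  by (rule cip_det[where e = "\<lambda>N. C * real (Suc t) / real N"])
     (auto simp: dist_real_def intro!: always_eventually lim_const_over_n dest: upd_close)

lemma Lt_nonneg: "Lt K r \<beta>s t z \<ge> 0"
  unfolding Lt_def pprob_def by (auto intro!: prod_nonneg mult_nonneg_nonneg)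

lemma Z_pos: "0 < (\<Sum>y\<in>prefixes T. Lt K r \<beta>s t y)"
proof -
  obtain x where x: "x \<in> set_pmf (K [])" using set_pmf_not_empty by fast
  have xp: "[x] \<in> prefixes T" by (simp add: prefixes_def)
  have "Lt K r \<beta>s t [x] = pmf (K []) x * r [x] powr \<beta>s t" by (simp add: Lt_def pprob_def)
  also have "\<dots> > 0" using x r_pos[OF xp] by (simp add: pmf_positive)
  finally show ?thesis
    by (intro sum_pos2[OF finite_prefixes xp]) (auto simp: Lt_nonneg)
qed

lemma cip_base: "cip (\<lambda>N. G N 0) (\<lambda>N s. mass z (fst s) / real N) (1 * Lt K r \<beta>s 0 z)"
proof (cases "length z = 1")
  case True
  then obtain x where z: "z = [x]" by (metis length_0_conv length_Suc_conv One_nat_def)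
  define W where "W = r [x] powr \<beta>s 0"
  have xp: "[x] \<in> prefixes T" by (simp add: prefixes_def)
  have W: "W > 0" unfolding W_def using r_pos[OF xp] by simp
  have L: "Lt K r \<beta>s 0 z = pmf (K []) x * W" unfolding z W_def by (simp add: Lt_def pprob_def)
  show ?thesis
  proof (rule cipI_bound)
    fix \<epsilon> :: real assume e: "\<epsilon> > 0"
    show "\<exists>\<rho>. (\<rho> \<longlongrightarrow> 0) sequentially \<and>
      eventually (\<lambda>N. measure_pmf.prob (G N 0) {s. dist (mass z (fst s) / real N) (1 * Lt K r \<beta>s 0 z) > \<epsilon>} \<le> \<rho> N) sequentially"
    proof (intro exI conjI)
      show "((\<lambda>N. 2 * exp (-2 * real N * (\<epsilon> / W)\<^sup>2)) \<longlongrightarrow> 0) sequentially"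
        by (rule exp_lim) (use e W in simp)
      show "eventually (\<lambda>N. measure_pmf.prob (G N 0) {s. dist (mass z (fst s) / real N) (1 * Lt K r \<beta>s 0 z) > \<epsilon>}
          \<le> 2 * exp (-2 * real N * (\<epsilon> / W)\<^sup>2)) sequentially"
        using eventually_gt_at_top[of 0]
      proof eventually_elim
        case (elim N)
        have "measure_pmf.prob (G N 0) {s. dist (mass z (fst s) / real N) (1 * Lt K r \<beta>s 0 z) > \<epsilon>}
            = measure_pmf.prob (iid N (K [])) {xs. dist (mass z (map (\<lambda>x. ([x], r [x] powr \<beta>s 0)) xs) / real N) (Lt K r \<beta>s 0 z) > \<epsilon>}"
          by (simp add: measure_map_pmf vimage_def)
        also have "\<dots> \<le> measure_pmf.prob (iid N (K [])) {xs. \<bar>real (count_list xs x) / N - pmf (K []) x\<bar> > \<epsilon> / W}"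
        proof (rule prob_mono_supp)
          fix xs assume "xs \<in> {xs. dist (mass z (map (\<lambda>x. ([x], r [x] powr \<beta>s 0)) xs) / real N) (Lt K r \<beta>s 0 z) > \<epsilon>}"
          then have "\<bar>real (count_list xs x) * W / N - pmf (K []) x * W\<bar> > \<epsilon>"
            unfolding L by (simp add: mass_map0 z W_def dist_real_def)
          also have "\<bar>real (count_list xs x) * W / N - pmf (K []) x * W\<bar> = W * \<bar>real (count_list xs x) / N - pmf (K []) x\<bar>"
          proof -
            have "real (count_list xs x) * W / N - pmf (K []) x * W = W * (real (count_list xs x) / N - pmf (K []) x)"
              by (simp add: algebra_simps)
            then show ?thesis using W by (simp add: abs_mult)
          qed
          finally show "xs \<in> {xs. \<bar>real (count_list xs x) / N - pmf (K []) x\<bar> > \<epsilon> / W}"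
            using W by (simp add: pos_divide_less_eq mult.commute)
        qed
        also have "\<dots> \<le> 2 * exp (-2 * real N * (\<epsilon> / W)\<^sup>2)"
          by (rule iid_hoeffding) (use elim e W in auto)
        finally show ?case .
      qed
    qed
  qed
next
  case False
  have L: "Lt K r \<beta>s 0 z = 0" using False by (simp add: Lt_def)
  have nz: "length z \<noteq> Suc 0" using False by simp
  show ?thesis
    by (rule cip_det[where e = "\<lambda>_. 0"]) (auto simp: L mass_map0 nz)
qed

lemma cip_step:
  assumes tT: "Suc t \<le> T" and c: "c > 0"
    and IH: "\<And>y. cip (\<lambda>N. G N t) (\<lambda>N s. mass y (fst s) / real N) (c * Lt K r \<beta>s t y)"
  shows "cip (\<lambda>N. G N (Suc t)) (\<lambda>N s. mass z (fst s) / real N)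
           ((1 / (\<Sum>y\<in>prefixes T. Lt K r \<beta>s t y)) * Lt K r \<beta>s (Suc t) z)"
proof (cases "1 \<le> length z \<and> length z \<le> t + 2")
  case False
  have L: "Lt K r \<beta>s (Suc t) z = 0" using False by (auto simp: Lt_def)
  show ?thesis
  proof (rule cip_det[where e = "\<lambda>_. 0"])
    show "eventually (\<lambda>N. \<forall>s\<in>set_pmf (G N (Suc t)). dist (mass z (fst s) / real N)
        ((1 / (\<Sum>y\<in>prefixes T. Lt K r \<beta>s t y)) * Lt K r \<beta>s (Suc t) z) \<le> 0) sequentially"
    proof (intro always_eventually allI ballI)
      fix N s assume s: "s \<in> set_pmf (G N (Suc t))"
      have "z \<notin> fst ` set (fst s)" using supp[OF tT s] False by auto
      then show "dist (mass z (fst s) / real N) ((1 / (\<Sum>y\<in>prefixes T. Lt K r \<beta>s t y)) * Lt K r \<beta>s (Suc t) z) \<le> 0"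
        by (simp add: mass_out L)
    qed
  qed simp
next
  case True
  define Z where "Z = (\<Sum>y\<in>prefixes T. Lt K r \<beta>s t y)"
  have Z: "Z > 0" using Z_pos unfolding Z_def .
  define a' where "a' = \<alpha> (Suc t)"
  have aa: "0 < a'" "a' < 1" unfolding a'_def using alpha[of "Suc t"] tT by auto
  define Fs where "Fs = Fcorr r \<alpha> (\<beta>s t) (\<beta>s (Suc t)) (Suc t) z"
  define Fa where "Fa = (\<lambda>s::('a list \<times> real) list \<times> real. Fcorr r \<alpha> (snd s) (upd (Suc t) (fst s) (snd s)) (Suc t) z)"
  define hh where "hh = (\<lambda>s::('a list \<times> real) list \<times> real. Fa s * (a' * pmf (bind_pmf (resample (fst s)) (\<lambda>u. map_pmf (\<lambda>x. u @ [x]) (K u))) z + (1 - a') * pmf (resample (fst s)) z))"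
  define m where "m = (1 / Z) * Lt K r \<beta>s (Suc t) z"
  have zp: "z \<in> prefixes T" using True tT by (simp add: prefixes_def)
  have zne: "z \<noteq> []" using True by auto
  have tT': "t \<le> T" using tT by simp
  have cipF: "cip (\<lambda>N. G N t) (\<lambda>N s. Fa s) Fs"
  proof -
    have "isCont (\<lambda>p. Fcorr r \<alpha> (fst p) (snd p) (Suc t) z) (\<beta>s t, \<beta>s (Suc t))"
      by (rule Fcorr_cont[OF tT zp]) (use True in simp)
    then show ?thesis unfolding Fa_def Fs_def
      by (rule cip_op2[OF cip_snd[OF tT'] cip_upd[OF tT], where g = "\<lambda>x y. Fcorr r \<alpha> x y (Suc t) z"])
  qed
  have cipD: "cip (\<lambda>N. G N t) (\<lambda>N s. \<Sum>y\<in>prefixes T. mass y (fst s) / real N) (c * Z)"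
  proof -
    have "cip (\<lambda>N. G N t) (\<lambda>N s. \<Sum>y\<in>prefixes T. mass y (fst s) / real N) (\<Sum>y\<in>prefixes T. c * Lt K r \<beta>s t y)"
      by (rule cip_sum[OF finite_prefixes]) (rule IH)
    then show ?thesis by (simp add: Z_def sum_distrib_left)
  qed
  have cZ: "c * Z \<noteq> 0" using c Z by simp
  define H' where "H' = (\<lambda>N s. Fa s * (a' * ((mass (butlast z) (fst s) / real N) / (\<Sum>y\<in>prefixes T. mass y (fst s) / real N) * pmf (K (butlast z)) (last z))
     + (1 - a') * ((mass z (fst s) / real N) / (\<Sum>y\<in>prefixes T. mass y (fst s) / real N))))"
  have cipH': "cip (\<lambda>N. G N t) H' (Fs * (a' * ((c * Lt K r \<beta>s t (butlast z)) / (c * Z) * pmf (K (butlast z)) (last z))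
     + (1 - a') * ((c * Lt K r \<beta>s t z) / (c * Z))))"
    unfolding H'_def
    by (rule cip_mult[OF cipF cip_add[OF cip_mult[OF cip_const cip_mult[OF cip_divide[OF IH cipD cZ] cip_const]]
         cip_mult[OF cip_const cip_divide[OF IH cipD cZ]]]])
  have limH: "Fs * (a' * ((c * Lt K r \<beta>s t (butlast z)) / (c * Z) * pmf (K (butlast z)) (last z))
     + (1 - a') * ((c * Lt K r \<beta>s t z) / (c * Z))) = m"
  proof -
    have e1: "(c * Lt K r \<beta>s t (butlast z)) / (c * Z) = Lt K r \<beta>s t (butlast z) / Z" using c by simp
    have e2: "(c * Lt K r \<beta>s t z) / (c * Z) = Lt K r \<beta>s t z / Z" using c by simp
    show ?thesis unfolding e1 e2 Fs_def a'_def m_def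
      using key_identity[OF tT _ _ Z, of z] True by simp
  qed
  have cipH: "cip (\<lambda>N. G N t) (\<lambda>N s. hh s) m"
  proof (rule cip_cong[OF cipH'[unfolded limH]])
    show "eventually (\<lambda>N. \<forall>s\<in>set_pmf (G N t). H' N s = hh s) sequentially"
      using eventually_gt_at_top[of 0]
    proof eventually_elim
      case (elim N)
      show ?case
      proof
        fix s assume s: "s \<in> set_pmf (G N t)"
        define P where "P = fst s"
        have sp: "length P = N * (t + 1)" "\<forall>p\<in>set P. snd p > 0"
          using supp[OF tT' s] unfolding P_def by auto
        have Pne: "P \<noteq> []" using sp elim by auto
        have wf1: "\<forall>p\<in>set P. snd p \<ge> 0" using sp by auto
        have wf2: "sum_list (map snd P) > 0" using sum_list_pos[OF Pne sp(2)] .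
        have SS: "sum_list (map snd P) = (\<Sum>y\<in>prefixes T. mass y P)"
        proof -
          have "(\<Sum>(z, w)\<leftarrow>P. w) = (\<Sum>y\<in>prefixes T. mass y P)"
            by (rule sum_list_pool1[OF finite_prefixes]) (use supp_pref[OF tT' s] P_def in simp)
          moreover have "(\<Sum>(z, w)\<leftarrow>P. w) = sum_list (map snd P)" by (simp add: case_prod_unfold)
          ultimately show ?thesis by simp
        qed
        have pr: "pmf (resample P) u = (mass u P / real N) / (\<Sum>y\<in>prefixes T. mass y P / real N)" for u
          unfolding pmf_resample[OF wf1 wf2] SS using elim by (simp add: sum_divide_distrib[symmetric])
        show "H' N s = hh s"
          unfolding H'_def hh_def pmf_kid P_def[symmetric] using zne by (simp add: pr)
      qed
    qed
  qed
  show ?thesis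
    unfolding Z_def[symmetric] m_def[symmetric]
  proof (rule cipI_bound)
    fix \<epsilon> :: real assume e: "\<epsilon> > 0"
    define Fb where "Fb = \<bar>Fs\<bar> + 1"
    have Fb: "Fb > 0" unfolding Fb_def by simp
    define \<rho> where "\<rho> = (\<lambda>N. 4 * exp (-2 * real N * (\<epsilon> / (4 * Fb))\<^sup>2) +
        (measure_pmf.prob (G N t) {s. dist (hh s) m > \<epsilon> / 2} + measure_pmf.prob (G N t) {s. dist (Fa s) Fs > 1}))"
    show "\<exists>\<rho>. (\<rho> \<longlongrightarrow> 0) sequentially \<and>
      eventually (\<lambda>N. measure_pmf.prob (G N (Suc t)) {s. dist (mass z (fst s) / real N) m > \<epsilon>} \<le> \<rho> N) sequentially"
    proof (intro exI conjI)
      have l1: "((\<lambda>N. 2 * exp (-2 * real N * (\<epsilon> / (4 * Fb))\<^sup>2)) \<longlongrightarrow> 0) sequentially"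
        by (rule exp_lim) (use e Fb in simp)
      have l1': "((\<lambda>N. 4 * exp (-2 * real N * (\<epsilon> / (4 * Fb))\<^sup>2)) \<longlongrightarrow> 0) sequentially"
        using tendsto_mult_right_zero[OF l1, of 2] by (simp add: mult.commute)
      have e2: "\<epsilon> / 2 > 0" using e by simp
      have l2: "((\<lambda>N. measure_pmf.prob (G N t) {s. dist (hh s) m > \<epsilon> / 2}) \<longlongrightarrow> 0) sequentially"
        using cipH e2 unfolding cip_def by blast
      have l3: "((\<lambda>N. measure_pmf.prob (G N t) {s. dist (Fa s) Fs > 1}) \<longlongrightarrow> 0) sequentially"
        using cipF unfolding cip_def by simp
      show "(\<rho> \<longlongrightarrow> 0) sequentially"
        using tendsto_add[OF l1' tendsto_add[OF l2 l3]] unfolding \<rho>_def by simp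
      show "eventually (\<lambda>N. measure_pmf.prob (G N (Suc t)) {s. dist (mass z (fst s) / real N) m > \<epsilon>} \<le> \<rho> N) sequentially"
        using eventually_gt_at_top[of 0]
      proof eventually_elim
        case (elim N)
        have "measure_pmf.prob (G N (Suc t)) {s. dist (mass z (fst s) / real N) m > \<epsilon>}
            \<le> 4 * exp (-2 * real N * (\<epsilon> / (4 * Fb))\<^sup>2) +
               measure_pmf.prob (G N t) {a. \<not> (dist (hh a) m \<le> \<epsilon> / 2 \<and> dist (Fa a) Fs \<le> 1)}"
          unfolding pbsmc_gen.simps(2)
        proof (rule prob_bind_bound)
          fix a assume a: "a \<in> set_pmf (G N t)" and good: "dist (hh a) m \<le> \<epsilon> / 2 \<and> dist (Fa a) Fs \<le> 1"
          obtain P b where ab: "a = (P, b)" by force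
          have FaB: "\<bar>Fcorr r \<alpha> b (upd (Suc t) P b) (Suc t) z\<bar> \<le> Fb"
            using good unfolding Fb_def Fa_def ab dist_real_def by (simp add: abs_le_iff) linarith
          have hm: "\<bar>Fcorr r \<alpha> b (upd (Suc t) P b) (Suc t) z *
              (\<alpha> (Suc t) * pmf (bind_pmf (resample P) (\<lambda>u. map_pmf (\<lambda>x. u @ [x]) (K u))) z +
               (1 - \<alpha> (Suc t)) * pmf (resample P) z) - m\<bar> \<le> \<epsilon> / 2"
            using good unfolding hh_def Fa_def a'_def ab dist_real_def by simp
          show "measure_pmf.prob ((\<lambda>(P, b). let b' = upd (Suc t) P b; q = resample P in
             bind_pmf (iid N (bind_pmf q (\<lambda>u. map_pmf (\<lambda>x. u @ [x]) (K u)))) (\<lambda>B.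
             map_pmf (\<lambda>S.
               (map (\<lambda>z. (z, \<alpha> (Suc t) * Fcorr r \<alpha> b b' (Suc t) z)) B @
                map (\<lambda>z. (z, (1 - \<alpha> (Suc t)) * Fcorr r \<alpha> b b' (Suc t) z / real (Suc t))) S, b'))
               (iid (N * Suc t) q))) a) {s. dist (mass z (fst s) / real N) m > \<epsilon>}
             \<le> 4 * exp (-2 * real N * (\<epsilon> / (4 * Fb))\<^sup>2)"
            unfolding ab prod.case Let_def
            by (rule inner_bound[where Fw = "\<lambda>z. Fcorr r \<alpha> b (upd (Suc t) P b) (Suc t) z"])
               (use elim aa[unfolded a'_def] FaB Fb e hm in auto)
        qed simp
        also have "measure_pmf.prob (G N t) {a. \<not> (dist (hh a) m \<le> \<epsilon> / 2 \<and> dist (Fa a) Fs \<le> 1)}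
            \<le> measure_pmf.prob (G N t) {s. dist (hh s) m > \<epsilon> / 2} + measure_pmf.prob (G N t) {s. dist (Fa s) Fs > 1}"
        proof -
          have "measure_pmf.prob (G N t) {a. \<not> (dist (hh a) m \<le> \<epsilon> / 2 \<and> dist (Fa a) Fs \<le> 1)}
              = measure_pmf.prob (G N t) ({s. dist (hh s) m > \<epsilon> / 2} \<union> {s. dist (Fa s) Fs > 1})"
            by (rule arg_cong[where f = "measure_pmf.prob (G N t)"]) auto
          also have "\<dots> \<le> measure_pmf.prob (G N t) {s. dist (hh s) m > \<epsilon> / 2} + measure_pmf.prob (G N t) {s. dist (Fa s) Fs > 1}"
            by (rule measure_subadditive) (auto simp: measure_pmf.emeasure_eq_measure)
          finally show ?thesis .
        qed
        finally show ?case unfolding \<rho>_def by simp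
      qed
    qed
  qed
qed

lemma cip_mass: "t \<le> T \<Longrightarrow> \<exists>c>0. \<forall>z. cip (\<lambda>N. G N t) (\<lambda>N s. mass z (fst s) / real N) (c * Lt K r \<beta>s t z)"
proof (induction t)
  case 0
  show ?case by (intro exI[of _ 1] conjI allI cip_base) simp
next
  case (Suc t)
  then obtain c where c: "c > 0" "\<And>z. cip (\<lambda>N. G N t) (\<lambda>N s. mass z (fst s) / real N) (c * Lt K r \<beta>s t z)"
    by auto
  show ?case
    by (intro exI[of _ "1 / (\<Sum>y\<in>prefixes T. Lt K r \<beta>s t y)"] conjI allI cip_step[OF Suc.prems c])
       (use Z_pos in simp)
qed

lemma cip_est: "t \<le> T \<Longrightarrow> cip (\<lambda>N. G N t) (\<lambda>N s. estimate (fst s) f) (target_exp K r T t (\<beta>s t) f)"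
proof -
  assume tT: "t \<le> T"
  obtain c where c: "c > 0" and IH: "\<And>z. cip (\<lambda>N. G N t) (\<lambda>N s. mass z (fst s) / real N) (c * Lt K r \<beta>s t z)"
    using cip_mass[OF tT] by auto
  have num: "cip (\<lambda>N. G N t) (\<lambda>N s. \<Sum>z\<in>prefixes T. f z * (mass z (fst s) / real N)) (\<Sum>z\<in>prefixes T. f z * (c * Lt K r \<beta>s t z))"
    by (rule cip_sum[OF finite_prefixes]) (rule cip_mult[OF cip_const IH])
  have den: "cip (\<lambda>N. G N t) (\<lambda>N s. \<Sum>z\<in>prefixes T. mass z (fst s) / real N) (\<Sum>z\<in>prefixes T. c * Lt K r \<beta>s t z)"
    by (rule cip_sum[OF finite_prefixes]) (rule IH)
  have dpos: "(\<Sum>z\<in>prefixes T. c * Lt K r \<beta>s t z) > 0"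
    using Z_pos[of t] c by (simp add: sum_distrib_left[symmetric])
  have rat: "cip (\<lambda>N. G N t) (\<lambda>N s. (\<Sum>z\<in>prefixes T. f z * (mass z (fst s) / real N)) / (\<Sum>z\<in>prefixes T. mass z (fst s) / real N))
      ((\<Sum>z\<in>prefixes T. f z * (c * Lt K r \<beta>s t z)) / (\<Sum>z\<in>prefixes T. c * Lt K r \<beta>s t z))"
    by (rule cip_divide[OF num den]) (use dpos in simp)
  have Lz: "Lt K r \<beta>s t z = pprob K z * r z powr \<beta>s t * (if length z \<le> t + 1 then 1 else 0)" if "z \<in> prefixes T" for z
    using that by (simp add: Lt_def prefixes_def)
  have lim: "(\<Sum>z\<in>prefixes T. f z * (c * Lt K r \<beta>s t z)) / (\<Sum>z\<in>prefixes T. c * Lt K r \<beta>s t z) = target_exp K r T t (\<beta>s t) f"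
  proof -
    have "(\<Sum>z\<in>prefixes T. f z * (c * Lt K r \<beta>s t z)) = c * (\<Sum>z\<in>prefixes T. pprob K z * r z powr \<beta>s t * (if length z \<le> t + 1 then 1 else 0) * f z)"
      by (simp add: sum_distrib_left Lz algebra_simps cong: sum.cong)
    moreover have "(\<Sum>z\<in>prefixes T. c * Lt K r \<beta>s t z) = c * (\<Sum>z\<in>prefixes T. pprob K z * r z powr \<beta>s t * (if length z \<le> t + 1 then 1 else 0))"
      by (simp add: sum_distrib_left Lz cong: sum.cong)
    ultimately show ?thesis unfolding target_exp_def using c by simp
  qed
  show ?thesis
  proof (rule cip_cong[OF rat[unfolded lim]])
    show "eventually (\<lambda>N. \<forall>s\<in>set_pmf (G N t).
        (\<Sum>z\<in>prefixes T. f z * (mass z (fst s) / real N)) / (\<Sum>z\<in>prefixes T. mass z (fst s) / real N) = estimate (fst s) f) sequentially"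
      using eventually_gt_at_top[of 0]
    proof eventually_elim
      case (elim N)
      show ?case
      proof
        fix s assume s: "s \<in> set_pmf (G N t)"
        have pr: "fst ` set (fst s) \<subseteq> prefixes T" using supp_pref[OF tT s] .
        have e1: "(\<Sum>z\<in>prefixes T. f z * (mass z (fst s) / real N)) = (\<Sum>z\<in>prefixes T. f z * mass z (fst s)) / real N"
          by (simp add: sum_divide_distrib)
        have e2: "(\<Sum>z\<in>prefixes T. mass z (fst s) / real N) = (\<Sum>z\<in>prefixes T. mass z (fst s)) / real N"
          by (simp add: sum_divide_distrib)
        show "(\<Sum>z\<in>prefixes T. f z * (mass z (fst s) / real N)) / (\<Sum>z\<in>prefixes T. mass z (fst s) / real N) = estimate (fst s) f"
          unfolding estimate_def sum_list_pool[OF finite_prefixes pr] sum_list_pool1[OF finite_prefixes pr] e1 e2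
          using elim by simp
      qed
    qed
  qed
qed

end


lemma sum_list_ge_len:
  fixes f :: "'z \<Rightarrow> real"
  shows "(\<forall>p\<in>set P. f p \<ge> a) \<Longrightarrow> sum_list (map f P) \<ge> real (length P) * a"
  by (induction P) (auto simp: algebra_simps)

lemma sum_list_le_len:
  fixes f :: "'z \<Rightarrow> real"
  shows "(\<forall>p\<in>set P. f p \<le> a) \<Longrightarrow> sum_list (map f P) \<le> real (length P) * a"
  by (induction P) (auto simp: algebra_simps)

lemma sigma_bound:
  fixes r :: "'z list \<Rightarrow> real" and P :: "('z list \<times> real) list"
  assumes Rmin: "0 < Rmin" and rb: "\<And>p. p \<in> set P \<Longrightarrow> Rmin \<le> r (fst p) \<and> r (fst p) \<le> Rmax"
  shows "0 \<le> sigma_pool r P \<and> sigma_pool r P \<le> Rmax\<^sup>2 / Rmin\<^sup>2 / real (length P)"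
proof (cases "P = []")
  case True then show ?thesis by (simp add: sigma_pool_def)
next
  case False
  define L where "L = real (length P)"
  have L: "L > 0" unfolding L_def using False by simp
  define S where "S = (\<Sum>(y, v)\<leftarrow>P. r y)"
  have S_eq: "S = sum_list (map (\<lambda>p. r (fst p)) P)" unfolding S_def by (simp add: case_prod_unfold)
  have "S \<ge> L * Rmin" unfolding S_eq L_def by (rule sum_list_ge_len) (use rb in auto)
  then have S: "S \<ge> L * Rmin" "S > 0" using L Rmin by (auto intro: order.strict_trans2[OF mult_pos_pos])
  have sig: "sigma_pool r P = sum_list (map (\<lambda>p. (r (fst p) / S)\<^sup>2) P)"
    unfolding sigma_pool_def S_def[symmetric] by (simp add: case_prod_unfold)
  have tm: "(r (fst p) / S)\<^sup>2 \<le> (Rmax / (L * Rmin))\<^sup>2" if "p \<in> set P" for p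
  proof -
    have r0: "0 \<le> r (fst p)" "r (fst p) \<le> Rmax" using rb[OF that] Rmin by auto
    have "r (fst p) / S \<le> Rmax / (L * Rmin)"
      using r0 S L Rmin by (intro frac_le) auto
    moreover have "0 \<le> r (fst p) / S" using r0 S by simp
    ultimately show ?thesis by (rule power_mono)
  qed
  have "sigma_pool r P \<le> L * (Rmax / (L * Rmin))\<^sup>2"
    unfolding sig L_def by (rule sum_list_le_len) (use tm L_def in auto)
  also have "\<dots> = Rmax\<^sup>2 / Rmin\<^sup>2 / L" using L by (simp add: power2_eq_square field_simps)
  moreover have "0 \<le> sum_list (map (\<lambda>p. (r (fst p) / S)\<^sup>2) P)" by (rule sum_list_nonneg) auto
  ultimately show ?thesis unfolding sig L_def by simp
qed

theorem theorem1:
  fixes K :: "'a::finite list \<Rightarrow> 'a pmf"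
    and r :: "'a list \<Rightarrow> real"
    and T :: nat and Rmin Rmax :: real
    and \<alpha> :: "nat \<Rightarrow> real"
  assumes Rmin: "0 < Rmin"
    and r_bounds: "\<And>z. z \<in> prefixes T \<Longrightarrow> Rmin \<le> r z \<and> r z \<le> Rmax"
    and alpha: "\<And>t. 1 \<le> t \<Longrightarrow> t \<le> T \<Longrightarrow> 0 < \<alpha> t \<and> \<alpha> t < 1"
  shows
    "(\<forall>(\<beta> :: nat \<Rightarrow> real) t (f :: 'a list \<Rightarrow> real) \<epsilon>.
        (\<forall>s\<le>T. 0 \<le> \<beta> s) \<longrightarrow> t \<le> T \<longrightarrow> 0 < \<epsilon> \<longrightarrow>
        ((\<lambda>N. measure_pmf.prob (pbsmc_fixed K r \<alpha> \<beta> N t)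
                {s. \<bar>estimate (fst s) f - target_exp K r T t (\<beta> t) f\<bar> > \<epsilon>})
           \<longlongrightarrow> 0) sequentially)
   \<and>
    (\<forall>(\<gamma> :: real) (\<beta>0 :: real). 0 < \<gamma> \<longrightarrow> 0 \<le> \<beta>0 \<longrightarrow>
       (\<exists>\<beta>star :: nat \<Rightarrow> real. \<forall>t\<le>T.
          (\<forall>\<epsilon>>0. ((\<lambda>N. measure_pmf.prob (pbsmc_adaptive K r \<alpha> \<gamma> \<beta>0 N t)
                      {s. \<bar>snd s - \<beta>star t\<bar> > \<epsilon>}) \<longlongrightarrow> 0) sequentially)
        \<and> (\<forall>(f :: 'a list \<Rightarrow> real) \<epsilon>. 0 < \<epsilon> \<longrightarrow>
            ((\<lambda>N. measure_pmf.prob (pbsmc_adaptive K r \<alpha> \<gamma> \<beta>0 N t)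
                {s. \<bar>estimate (fst s) f - target_exp K r T t (\<beta>star t) f\<bar> > \<epsilon>})
               \<longlongrightarrow> 0) sequentially)))"
proof (intro conjI allI impI)
  have Cnn0: "(0::real) \<le> 0" by simp
  fix \<beta> :: "nat \<Rightarrow> real" and t and f :: "'a list \<Rightarrow> real" and \<epsilon> :: real
  assume "\<forall>s\<le>T. 0 \<le> \<beta> s" and tT: "t \<le> T" and e: "0 < \<epsilon>"
  have "cip (\<lambda>N. pbsmc_gen K r \<alpha> (\<lambda>s P b. \<beta> s) (\<beta> 0) N t) (\<lambda>N s. estimate (fst s) f) (target_exp K r T t (\<beta> t) f)"
    by (rule cip_est[where upd = "\<lambda>s P b. \<beta> s" and \<beta>s = \<beta> and C = 0, OF Rmin r_bounds alpha Cnn0 _ tT]) auto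
  then show "((\<lambda>N. measure_pmf.prob (pbsmc_fixed K r \<alpha> \<beta> N t)
                {s. \<bar>estimate (fst s) f - target_exp K r T t (\<beta> t) f\<bar> > \<epsilon>}) \<longlongrightarrow> 0) sequentially"
    unfolding cip_def pbsmc_fixed_def dist_real_def using e by blast
next
  fix \<gamma> \<beta>0 :: real
  assume g: "0 < \<gamma>" and b0: "0 \<le> \<beta>0"
  define \<beta>s where "\<beta>s = (\<lambda>t::nat. \<beta>0 + real t * \<gamma>)"
  have rmm: "Rmin \<le> Rmax" using r_bounds[of "[undefined]"] by (simp add: prefixes_def)
  define C where "C = \<gamma> * (Rmax\<^sup>2 / Rmin\<^sup>2 + 1)"
  have Cnn: "0 \<le> C" unfolding C_def using g by (simp add: add_nonneg_nonneg)
  have ub: "\<bar>adaptive_upd r \<gamma> s P b - \<beta>s s\<bar> \<le> \<bar>b - \<beta>s (s - 1)\<bar> + C / real (length P)"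
    if s: "1 \<le> s" "s \<le> T" and P: "fst ` set P \<subseteq> prefixes T" for s P b
  proof -
    have sb: "0 \<le> sigma_pool r P \<and> sigma_pool r P \<le> Rmax\<^sup>2 / Rmin\<^sup>2 / real (length P)"
      by (rule sigma_bound[OF Rmin]) (use r_bounds P in force)
    have bs: "\<beta>s s = \<beta>s (s - 1) + \<gamma>" unfolding \<beta>s_def using s by (simp add: of_nat_diff algebra_simps)
    have "adaptive_upd r \<gamma> s P b - \<beta>s s = (b - \<beta>s (s - 1)) + \<gamma> * (1 / real (length P) - sigma_pool r P)"
      unfolding adaptive_upd_def bs by (simp add: algebra_simps)
    moreover have "\<bar>\<gamma> * (1 / real (length P) - sigma_pool r P)\<bar> \<le> C / real (length P)"
    proof -
      have "\<bar>1 / real (length P) - sigma_pool r P\<bar> \<le> 1 / real (length P) + sigma_pool r P"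
        using sb by (simp add: abs_le_iff)
      also have "\<dots> \<le> 1 / real (length P) + Rmax\<^sup>2 / Rmin\<^sup>2 / real (length P)" using sb by simp
      also have "\<dots> = (Rmax\<^sup>2 / Rmin\<^sup>2 + 1) / real (length P)" by (simp add: field_simps add_divide_distrib)
      finally have "\<bar>1 / real (length P) - sigma_pool r P\<bar> \<le> (Rmax\<^sup>2 / Rmin\<^sup>2 + 1) / real (length P)" .
      then have "\<gamma> * \<bar>1 / real (length P) - sigma_pool r P\<bar> \<le> \<gamma> * ((Rmax\<^sup>2 / Rmin\<^sup>2 + 1) / real (length P))"
        using g by (intro mult_left_mono) auto
      then show ?thesis unfolding C_def using g by (simp add: abs_mult)
    qed
    ultimately show ?thesis by (simp add: abs_triangle_ineq order_trans)
  qed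
  have b00: "\<beta>0 = \<beta>s 0" unfolding \<beta>s_def by simp
  show "\<exists>\<beta>star :: nat \<Rightarrow> real. \<forall>t\<le>T.
          (\<forall>\<epsilon>>0. ((\<lambda>N. measure_pmf.prob (pbsmc_adaptive K r \<alpha> \<gamma> \<beta>0 N t)
                      {s. \<bar>snd s - \<beta>star t\<bar> > \<epsilon>}) \<longlongrightarrow> 0) sequentially)
        \<and> (\<forall>(f :: 'a list \<Rightarrow> real) \<epsilon>. 0 < \<epsilon> \<longrightarrow>
            ((\<lambda>N. measure_pmf.prob (pbsmc_adaptive K r \<alpha> \<gamma> \<beta>0 N t)
                {s. \<bar>estimate (fst s) f - target_exp K r T t (\<beta>star t) f\<bar> > \<epsilon>})
               \<longlongrightarrow> 0) sequentially)"
  proof (intro exI[of _ \<beta>s] allI impI conjI)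
    fix t :: nat assume tT: "t \<le> T"
    have c1: "cip (\<lambda>N. pbsmc_gen K r \<alpha> (adaptive_upd r \<gamma>) (\<beta>s 0) N t) (\<lambda>N s. snd s) (\<beta>s t)"
      by (rule cip_snd[where upd = "adaptive_upd r \<gamma>" and C = C, OF Rmin r_bounds alpha Cnn ub tT])
    have c2: "cip (\<lambda>N. pbsmc_gen K r \<alpha> (adaptive_upd r \<gamma>) (\<beta>s 0) N t) (\<lambda>N s. estimate (fst s) f) (target_exp K r T t (\<beta>s t) f)" for f
      by (rule cip_est[where upd = "adaptive_upd r \<gamma>" and C = C, OF Rmin r_bounds alpha Cnn ub tT])
    fix \<epsilon> :: real assume e: "\<epsilon> > 0"
    show "((\<lambda>N. measure_pmf.prob (pbsmc_adaptive K r \<alpha> \<gamma> \<beta>0 N t) {s. \<bar>snd s - \<beta>s t\<bar> > \<epsilon>}) \<longlongrightarrow> 0) sequentially"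
      using c1 e unfolding cip_def pbsmc_adaptive_def dist_real_def b00 by blast
    fix f :: "'a list \<Rightarrow> real"
    show "((\<lambda>N. measure_pmf.prob (pbsmc_adaptive K r \<alpha> \<gamma> \<beta>0 N t)
                {s. \<bar>estimate (fst s) f - target_exp K r T t (\<beta>s t) f\<bar> > \<epsilon>}) \<longlongrightarrow> 0) sequentially"
      using c2[of f] e unfolding cip_def pbsmc_adaptive_def dist_real_def b00 by blast
  qed
qed

end
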